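(* When the weighted GK algorithm described in the context is run, after the deletion step performed once $k$ updates have been seen, the number of type-2 elements stored in WQS is $O(\ell\log t_k)$.
   Context: A weighted stream consists of updates $(x_i,w(x_i))$, $i=1,2,\dots$, with $x_i$ from a totally ordered universe and $w(x_i)$ a positive integer. Let $W_k=\sum_{i=1}^k w(x_i)$, $\ell=1/\varepsilon$, $t_k=\lfloor\varepsilon W_k\rfloor$, and $t_0(x_k)=\lfloor\varepsilon(W_{k-1}+1)\rfloor$. The summary WQS stores elements $e_1<\dots<e_s$ of the stream with weights $w(e)$ and integers $\mathrm{rmin}(e),\mathrm{rmax}(e)$; a sentinel $e_0$ has $\mathrm{rmin}(e_0)=\mathrm{rmax}(e_0)=0$, $w(e_0)=1$; an element $+\infty$, larger than all others, is inserted at the start of the stream and always stored as $e_s$. Insert$(x,w(x))$: store $x$; let $e_i$ be the smallest stored element with $e_i>x$; set $\mathrm{rmin}(x)=\mathrm{rmin}(e_{i-1})+w(e_{i-1})$, $\mathrm{rmax}(x)=\mathrm{rmax}(e_i)$, and increase $\mathrm{rmin}(e_j),\mathrm{rmax}(e_j)$ by $w(x)$ for all $j\ge i$. Delete$(e_i)$: remove $e_i$, leaving other values unchanged. Define $g_i=\mathrm{rmin}(e_i)-(\mathrm{rmin}(e_{i-1})+w(e_{i-1})-1)$, $\Delta_i=\mathrm{rmax}(e_i)-\mathrm{rmin}(e_i)$, $G_i=g_i+w(e_i)-1$. Band values: after $k$ updates, $\mathbf{v}(x)=0$ if $t_k=t_0(x)$, and otherwise $\mathbf{v}(x)$ is the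 unique integer $\alpha\ge1$ with $2^{\alpha-1}+(t_k\bmod 2^{\alpha-1})\le t_k-t_0(x)<2^{\alpha}+(t_k\bmod 2^{\alpha})$. The segment $\mathrm{seg}(e_i)$ is the maximal set of consecutive stored elements $e_j,\dots,e_{i-1}$ all with band value strictly less than $\mathbf{v}(e_i)$; $G^*_i=G_i+\sum_{e_k\in\mathrm{seg}(e_i)}G_k$. Weighted GK algorithm: for each arriving update $(x_j,w(x_j))$: (i) run Insert$(x_j,w(x_j))$; (ii) (deletion step) while there is a stored $e_i$ ($1\le i<s$) with $\mathbf{v}(e_i)\le\mathbf{v}(e_{i+1})$ and $G^*_i+g_{i+1}+\Delta_{i+1}\le t_j$, run Delete on $e_i$ and on every element of $\mathrm{seg}(e_i)$. After the deletion step once $k$ updates have been seen, a stored element $e_i$ ($1\le i<s$) is type-1 if $\mathbf{v}(e_i)>\mathbf{v}(e_{i+1})$, and type-2 if it is not type-1 (in which case $G^*_i+g_{i+1}+\Delta_{i+1}>t_k$). *)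

theory Defs
  imports Complex_Main
begin

text \<open>Updates are indexed from 1: the j-th update is (x j, w j).\<close>

definition Wsum :: "(nat \<Rightarrow> nat) \<Rightarrow> nat \<Rightarrow> nat" where
  "Wsum w k = (\<Sum>i=1..k. w i)"

definition tval :: "real \<Rightarrow> (nat \<Rightarrow> nat) \<Rightarrow> nat \<Rightarrow> nat" where
  "tval \<epsilon> w k = nat \<lfloor>\<epsilon> * real (Wsum w k)\<rfloor>"

definition t0val :: "real \<Rightarrow> (nat \<Rightarrow> nat) \<Rightarrow> nat \<Rightarrow> nat" where
  "t0val \<epsilon> w k = nat \<lfloor>\<epsilon> * (real (Wsum w (k - 1)) + 1)\<rfloor>"

definition band :: "nat \<Rightarrow> nat \<Rightarrow> nat" where
  "band t t0 = (if t = t0 then 0 else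
     (THE \<alpha>. 1 \<le> \<alpha> \<and> 2^(\<alpha>-1) + t mod 2^(\<alpha>-1) \<le> t - t0 \<and> t - t0 < 2^\<alpha> + t mod 2^\<alpha>))"

datatype 'a ext = Fin 'a | PInf

fun ext_gt :: "'a::linorder ext \<Rightarrow> 'a \<Rightarrow> bool" where
  "ext_gt (Fin a) x = (x < a)"
| "ext_gt PInf x = True"

record 'a entry =
  ev :: "'a ext"
  ew :: nat
  ermin :: int
  ermax :: int
  et0 :: nat

text \<open>A WQS state is the list [e_1, ..., e_s] (sorted); e_i = L ! (i-1).
  Index 0 denotes the sentinel e_0 with rmin = rmax = 0, w = 1.\<close>

definition wE :: "'a entry list \<Rightarrow> nat \<Rightarrow> int" where
  "wE L i = (if i = 0 then 1 else int (ew (L ! (i - 1))))"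

definition rminE :: "'a entry list \<Rightarrow> nat \<Rightarrow> int" where
  "rminE L i = (if i = 0 then 0 else ermin (L ! (i - 1)))"

definition rmaxE :: "'a entry list \<Rightarrow> nat \<Rightarrow> int" where
  "rmaxE L i = (if i = 0 then 0 else ermax (L ! (i - 1)))"

definition vE :: "nat \<Rightarrow> 'a entry list \<Rightarrow> nat \<Rightarrow> nat" where
  "vE t L i = band t (et0 (L ! (i - 1)))"

definition gE :: "'a entry list \<Rightarrow> nat \<Rightarrow> int" where
  "gE L i = rminE L i - (rminE L (i - 1) + wE L (i - 1) - 1)"

definition DeltaE :: "'a entry list \<Rightarrow> nat \<Rightarrow> int" where
  "DeltaE L i = rmaxE L i - rminE L i"

definition GE :: "'a entry list \<Rightarrow> nat \<Rightarrow> int" where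
  "GE L i = gE L i + wE L i - 1"

text \<open>seg(e_i) = {e_j, ..., e_(i-1)} with j = segStart (empty if j = i).\<close>
definition segStart :: "nat \<Rightarrow> 'a entry list \<Rightarrow> nat \<Rightarrow> nat" where
  "segStart t L i = (LEAST j. 1 \<le> j \<and> (\<forall>m. j \<le> m \<and> m < i \<longrightarrow> vE t L m < vE t L i))"

definition GstarE :: "nat \<Rightarrow> 'a entry list \<Rightarrow> nat \<Rightarrow> int" where
  "GstarE t L i = GE L i + (\<Sum>m\<in>{segStart t L i..<i}. GE L m)"

definition deletable :: "nat \<Rightarrow> 'a entry list \<Rightarrow> nat \<Rightarrow> bool" where
  "deletable t L i \<longleftrightarrow> 1 \<le> i \<and> i < length L \<and> vE t L i \<le> vE t L (Suc i) \<and>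
     GstarE t L i + gE L (Suc i) + DeltaE L (Suc i) \<le> int t"

text \<open>Delete e_i and all of seg(e_i), i.e. e_j..e_i with j = segStart.\<close>
definition delete_seg :: "nat \<Rightarrow> 'a entry list \<Rightarrow> nat \<Rightarrow> 'a entry list" where
  "delete_seg t L i = take (segStart t L i - 1) L @ drop i L"

text \<open>0-based position of the smallest stored element greater than x.\<close>
definition ins_pos :: "'a::linorder entry list \<Rightarrow> 'a \<Rightarrow> nat" where
  "ins_pos L x = (LEAST p. p < length L \<and> ext_gt (ev (L ! p)) x)"

definition wqs_insert :: "'a::linorder entry list \<Rightarrow> 'a \<Rightarrow> nat \<Rightarrow> nat \<Rightarrow> 'a entry list" where
  "wqs_insert L x wx t0 =
    (let p = ins_pos L x;
         new = \<lparr>ev = Fin x, ew = wx, ermin = rminE L p + wE L p, ermax = ermax (L ! p), et0 = t0\<rparr>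
     in take p L @ [new] @
        map (\<lambda>e. e\<lparr>ermin := ermin e + int wx, ermax := ermax e + int wx\<rparr>) (drop p L))"

text \<open>Initial state: only +infinity is stored (rmin = rmax = rmin(e_0)+w(e_0) = 1, t_0 = 0).\<close>
definition wqs_init :: "'a entry list" where
  "wqs_init = [\<lparr>ev = PInf, ew = 1, ermin = 1, ermax = 1, et0 = 0\<rparr>]"

definition del_step :: "nat \<Rightarrow> 'a entry list \<Rightarrow> 'a entry list \<Rightarrow> bool" where
  "del_step t A B \<longleftrightarrow> (\<exists>i. deletable t A i \<and> B = delete_seg t A i)"

text \<open>gk_reach eps x w k L: L is a possible WQS state after the deletion step
  following the k-th update (any order of deletions in the while loop).\<close>
inductive gk_reach :: "real \<Rightarrow> (nat \<Rightarrow> 'a::linorder) \<Rightarrow> (nat \<Rightarrow> nat) \<Rightarrow> nat \<Rightarrow> 'a entry list \<Rightarrow> bool"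
  for \<epsilon> x w where
  init: "gk_reach \<epsilon> x w 0 wqs_init"
| step: "gk_reach \<epsilon> x w k L \<Longrightarrow>
    (del_step (tval \<epsilon> w (Suc k)))\<^sup>*\<^sup>*
       (wqs_insert L (x (Suc k)) (w (Suc k)) (t0val \<epsilon> w (Suc k))) L' \<Longrightarrow>
    \<not> (\<exists>i. deletable (tval \<epsilon> w (Suc k)) L' i) \<Longrightarrow>
    gk_reach \<epsilon> x w (Suc k) L'"

definition type2_count :: "nat \<Rightarrow> 'a entry list \<Rightarrow> nat" where
  "type2_count t L = card {i. 1 \<le> i \<and> i < length L \<and> \<not> (vE t L i > vE t L (Suc i))}"

end

theory Submission
  imports Defs
begin


definition hb :: "nat \<Rightarrow> nat \<Rightarrow> nat \<Rightarrow> bool" where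
  "hb t t0 a \<longleftrightarrow> 2^a + t mod 2^a \<le> t - t0"

lemma hb_mono_a: "hb t t0 (Suc a) \<Longrightarrow> hb t t0 a"
proof -
  assume h: "hb t t0 (Suc a)"
  have "t mod 2^a \<le> t mod 2^(Suc a)"
  proof -
    have "t mod (2^a * 2) = t mod 2^a + 2^a * (t div 2^a mod 2)"
      by (simp add: mod_mult2_eq)
    then show ?thesis by (metis mult.commute le_add1 power_Suc2)
  qed
  moreover have "(2::nat)^a \<le> 2^Suc a" by simp
  ultimately show ?thesis using h unfolding hb_def by linarith
qed

lemma hb_mono_a': "hb t t0 b \<Longrightarrow> a \<le> b \<Longrightarrow> hb t t0 a"
  by (induction b arbitrary: a rule: nat.induct) (auto intro: hb_mono_a simp: le_Suc_eq)

lemma hb_big: "t < 2^a \<Longrightarrow> \<not> hb t t0 a"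
  unfolding hb_def by linarith

lemma band_char:
  assumes "t0 \<le> t"
  shows "band t t0 = (LEAST a. \<not> hb t t0 a)"
proof -
  define A where "A = (LEAST a. \<not> hb t t0 a)"
  have ex: "\<not> hb t t0 t" by (rule hb_big) (simp add: less_exp)
  have nA: "\<not> hb t t0 A" unfolding A_def by (rule LeastI[of _ t]) (rule ex)
  have lA: "b < A \<Longrightarrow> hb t t0 b" for b unfolding A_def using not_less_Least by blast
  show ?thesis
  proof (cases "t = t0")
    case True
    then have "\<not> hb t t0 0" unfolding hb_def by simp
    then have "A = 0" unfolding A_def by (simp add: Least_eq_0)
    then show ?thesis using True by (simp add: band_def A_def)
  next
    case False
    then have "hb t t0 0" unfolding hb_def using assms by simp
    then have A1: "A \<ge> 1" using nA by (cases A) auto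
    have cond: "1 \<le> A \<and> 2^(A-1) + t mod 2^(A-1) \<le> t - t0 \<and> t - t0 < 2^A + t mod 2^A"
      using A1 lA[of "A-1"] nA unfolding hb_def by auto
    have uniq: "\<beta> = A" if "1 \<le> \<beta> \<and> 2^(\<beta>-1) + t mod 2^(\<beta>-1) \<le> t - t0 \<and> t - t0 < 2^\<beta> + t mod 2^\<beta>" for \<beta>
    proof -
      have h1: "hb t t0 (\<beta>-1)" and h2: "\<not> hb t t0 \<beta>" using that unfolding hb_def by auto
      have "\<not> \<beta> < A" using lA h2 by blast
      moreover have "\<not> A < \<beta>"
      proof
        assume "A < \<beta>" then have "A \<le> \<beta> - 1" by simp
        then show False using hb_mono_a'[OF h1] nA by blast
      qed
      ultimately show ?thesis by simp
    qed
    have "band t t0 = (THE \<alpha>. 1 \<le> \<alpha> \<and> 2^(\<alpha>-1) + t mod 2^(\<alpha>-1) \<le> t - t0 \<and> t - t0 < 2^\<alpha> + t mod 2^\<alpha>)"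
      using False by (simp add: band_def)
    also have "\<dots> = A" using cond uniq by (rule the_equality)
    finally show ?thesis by (simp add: A_def)
  qed
qed

lemma band_le_iff:
  assumes "t0 \<le> t"
  shows "band t t0 \<le> a \<longleftrightarrow> \<not> hb t t0 a"
proof
  assume "band t t0 \<le> a"
  then have "(LEAST a. \<not> hb t t0 a) \<le> a" using band_char[OF assms] by simp
  moreover have "\<not> hb t t0 (LEAST a. \<not> hb t t0 a)"
    by (rule LeastI[of _ t]) (rule hb_big, simp add: less_exp)
  ultimately show "\<not> hb t t0 a" using hb_mono_a' by blast
next
  assume "\<not> hb t t0 a"
  then show "band t t0 \<le> a" using band_char[OF assms] by (simp add: Least_le)
qed



lemma hb_iff: "t0 \<le> t \<Longrightarrow> hb t t0 a \<longleftrightarrow> t0 + 2^a \<le> 2^a * (t div 2^a)"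
proof -
  assume "t0 \<le> t"
  have "t = 2^a * (t div 2^a) + t mod 2^a" by simp
  then show ?thesis unfolding hb_def using \<open>t0 \<le> t\<close> by linarith
qed

lemma hb_mono_t0: "hb t y c \<Longrightarrow> x \<le> y \<Longrightarrow> hb t x c"
  unfolding hb_def by linarith

lemma hb_mono_t: "hb t y c \<Longrightarrow> y \<le> t \<Longrightarrow> t \<le> t' \<Longrightarrow> hb t' y c"
proof -
  assume h: "hb t y c" "y \<le> t" "t \<le> t'"
  have "2^c * (t div 2^c) \<le> 2^c * (t' div 2^c)" using h(3) by (simp add: div_le_mono)
  then show ?thesis using h hb_iff[of y t c] hb_iff[of y t' c] by linarith
qed

lemma mult_step:
  fixes d x y :: nat
  assumes "d > 0" "d * x + d > d * y"
  shows "d * x \<ge> d * y"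
proof -
  have "d * (x + 1) > d * y" using assms(2) by (simp add: algebra_simps)
  then have "x + 1 > y" by (meson mult_less_cancel1)
  then show ?thesis by simp
qed

lemma div_two_step: "(t::nat) div 2^c \<le> 2 * (t div 2^(Suc c)) + 1"
proof -
  have "t div 2^(Suc c) = t div (2^c * 2)" by (simp add: mult.commute)
  also have "\<dots> = t div 2^c div 2" by (rule div_mult2_eq)
  finally have "t div 2^(Suc c) = t div 2^c div 2" .
  then show ?thesis by linarith
qed

lemma stab:
  assumes x: "x \<le> t" and y: "y \<le> t" and tt: "t \<le> t'"
    and bxy: "band t x \<le> band t y" and ny: "\<not> hb t' y \<alpha>"
  shows "\<not> hb t' x \<alpha>"
proof
  assume hx: "hb t' x \<alpha>"
  define \<beta> where "\<beta> = band t y"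
  show False
  proof (cases "\<alpha> < \<beta>")
    case True
    then have "hb t y \<alpha>" using band_le_iff[OF y, of \<alpha>] \<beta>_def by simp
    then show False using hb_mono_t[OF _ y tt] ny by blast
  next
    case False
    show False
    proof (cases "y \<le> x")
      case True
      then show False using hb_mono_t0[OF hx True] ny by blast
    next
      case yx: False
      have "band t y \<le> band t x"
      proof (rule ccontr)
        assume "\<not> band t y \<le> band t x"
        then have "hb t y (band t x)" using band_le_iff[OF y] by blast
        then have "hb t x (band t x)" using hb_mono_t0 yx by simp
        then show False using band_le_iff[OF x] by blast
      qed
      then have bx: "band t x = \<beta>" using bxy \<beta>_def by simp
      show False
      proof (cases "\<beta> = 0")
        case True
        then have "\<not> hb t x 0" using band_le_iff[OF x, of 0] bx by simp
        then have "x + 1 > t" using hb_iff[OF x, of 0] by simp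
        then show False using yx y by simp
      next
        case bpos: False
        have nx: "\<not> hb t x \<beta>" using band_le_iff[OF x, of \<beta>] bx by simp
        then have xlow: "x + 2^\<beta> > 2^\<beta> * (t div 2^\<beta>)" using hb_iff[OF x] by simp
        have "\<not> band t y \<le> \<beta> - 1" using bpos \<beta>_def by simp
        then have "hb t y (\<beta> - 1)" using band_le_iff[OF y] by blast
        then have hy: "y + 2^(\<beta>-1) \<le> 2^(\<beta>-1) * (t div 2^(\<beta>-1))" using hb_iff[OF y] by simp
        have "t div 2^(\<beta>-1) \<le> 2 * (t div 2^\<beta>) + 1"
          using div_two_step[of t "\<beta>-1"] bpos by simp
        then have "2^(\<beta>-1) * (t div 2^(\<beta>-1)) \<le> 2^(\<beta>-1) * (2 * (t div 2^\<beta>) + 1)"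
          by (rule mult_le_mono2)
        also have "\<dots> = 2^\<beta> * (t div 2^\<beta>) + 2^(\<beta>-1)"
          using bpos by (simp add: algebra_simps power_Suc[symmetric] del: power_Suc)
        finally have ylow: "y \<le> 2^\<beta> * (t div 2^\<beta>)" using hy by linarith
        have ab: "\<beta> \<le> \<alpha>" using False by simp
        have xt': "x \<le> t'" using x tt by simp
        have hx': "x + 2^\<alpha> \<le> 2^\<alpha> * (t' div 2^\<alpha>)" using hx hb_iff[OF xt'] by simp
        then have q: "t' div 2^\<alpha> \<ge> 1" by (cases "t' div 2^\<alpha>") auto
        define q' where "q' = 2^(\<alpha>-\<beta>) * (t' div 2^\<alpha> - 1)"
        have pw: "(2::nat)^\<alpha> = 2^\<beta> * 2^(\<alpha>-\<beta>)" using ab by (simp add: power_add[symmetric])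
        have Xeq: "2^\<alpha> * (t' div 2^\<alpha>) - 2^\<alpha> = 2^\<beta> * q'"
          unfolding q'_def pw using q by (simp add: algebra_simps diff_mult_distrib2)
        have "2^\<beta> * q' + 2^\<beta> > 2^\<beta> * (t div 2^\<beta>)" using xlow hx' Xeq by linarith
        then have "2^\<beta> * q' \<ge> 2^\<beta> * (t div 2^\<beta>)" by (intro mult_step) simp
        then have "y + 2^\<alpha> \<le> 2^\<alpha> * (t' div 2^\<alpha>)" using ylow Xeq hx' by linarith
        then have "hb t' y \<alpha>" using hb_iff[of y t' \<alpha>] y tt by simp
        then show False using ny by simp
      qed
    qed
  qed
qed



definition prevR :: "'a entry list \<Rightarrow> nat \<Rightarrow> int" where
  "prevR L m = rminE L m + wE L m"

definition vw :: "'a entry list \<Rightarrow> (nat \<times> nat \<times> int \<times> int) list" where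
  "vw L = map (\<lambda>m. (et0 (L!m), ew (L!m), ermin (L!m) - prevR L m, ermax (L!m) - prevR L m)) [0..<length L]"

lemma length_vw[simp]: "length (vw L) = length L" by (simp add: vw_def)

lemma nth_vw: "m < length L \<Longrightarrow> vw L ! m = (et0 (L!m), ew (L!m), ermin (L!m) - prevR L m, ermax (L!m) - prevR L m)"
  by (simp add: vw_def)

lemma prevR_Suc: "prevR L (Suc m) = ermin (L!m) + int (ew (L!m))"
  by (simp add: prevR_def rminE_def wE_def)

lemma prevR_0: "prevR L 0 = 1"
  by (simp add: prevR_def rminE_def wE_def)

lemma ins_pos_lt:
  assumes "L \<noteq> []" "ev (last L) = PInf"
  shows "ins_pos L x < length L"
proof -
  have "length L - 1 < length L \<and> ext_gt (ev (L ! (length L - 1))) x"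
    using assms by (simp add: last_conv_nth)
  then show ?thesis unfolding ins_pos_def by (rule LeastI2) simp
qed

definition shw :: "nat \<Rightarrow> 'a entry \<Rightarrow> 'a entry" where
  "shw wx e = e\<lparr>ermin := ermin e + int wx, ermax := ermax e + int wx\<rparr>"

lemma wqs_insert_alt:
  "wqs_insert L x wx t0 = take (ins_pos L x) L @
     [\<lparr>ev = Fin x, ew = wx, ermin = prevR L (ins_pos L x), ermax = ermax (L ! (ins_pos L x)), et0 = t0\<rparr>]
     @ map (shw wx) (drop (ins_pos L x) L)"
  unfolding wqs_insert_def Let_def prevR_def shw_def by (rule refl)

lemma ins_nth:
  fixes nw :: "'a entry" and wx :: nat
  assumes p: "p < length L"
  defines "L' \<equiv> take p L @ [nw] @ map (shw wx) (drop p L)"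
  shows "length L' = Suc (length L)"
    and "m < length L' \<Longrightarrow> L' ! m = (if m < p then L!m else if m = p then nw else shw wx (L!(m-1)))"
proof -
  show "length L' = Suc (length L)" using p by (simp add: L'_def)
  assume m: "m < length L'"
  show "L' ! m = (if m < p then L!m else if m = p then nw else shw wx (L!(m-1)))"
    using p m by (auto simp: L'_def nth_append min_def)
qed

lemma ins_vw:
  fixes wx :: nat and x :: "'a" and t0 :: nat and L :: "'a entry list"
  assumes p: "p < length L"
  defines "nw \<equiv> \<lparr>ev = Fin x, ew = wx, ermin = prevR L p, ermax = ermax (L ! p), et0 = t0\<rparr>"
  defines "L' \<equiv> take p L @ [nw] @ map (shw wx) (drop p L)"
  shows "vw L' = take p (vw L) @ [(t0, wx, 0, ermax (L!p) - prevR L p)] @ drop p (vw L)"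
proof -
  have len: "length L' = Suc (length L)" and nth: "\<And>m. m < length L' \<Longrightarrow> L' ! m = (if m < p then L!m else if m = p then nw else shw wx (L!(m-1)))"
    using ins_nth[OF p, where nw=nw and wx=wx] unfolding L'_def by auto
  have pr1: "prevR L' m = prevR L m" if "m \<le> p" for m
  proof (cases m)
    case 0 then show ?thesis by (simp add: prevR_0)
  next
    case (Suc m') then show ?thesis using that nth[of m'] len p by (simp add: prevR_Suc)
  qed
  have pr2: "prevR L' m = prevR L (m-1) + int wx" if pm: "p < m" "m \<le> length L" for m
  proof -
    obtain m' where m': "m = Suc m'" using pm by (cases m) auto
    show ?thesis
    proof (cases "m' = p")
      case True then show ?thesis using m' nth[of m'] len p by (simp add: prevR_Suc nw_def)
    next
      case False
      then have "p < m'" using pm m' by simp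
      then obtain m'' where "m' = Suc m''" by (cases m') auto
      then show ?thesis using m' False pm nth[of m'] len p by (simp add: prevR_Suc shw_def)
    qed
  qed
  show ?thesis
  proof (rule nth_equalityI)
    show "length (vw L') = length (take p (vw L) @ [(t0, wx, 0, ermax (L!p) - prevR L p)] @ drop p (vw L))"
      using len p by simp
  next
    fix m assume "m < length (vw L')"
    then have m: "m < Suc (length L)" using len by simp
    consider "m < p" | "m = p" | "p < m" by linarith
    then show "vw L' ! m = (take p (vw L) @ [(t0, wx, 0, ermax (L!p) - prevR L p)] @ drop p (vw L)) ! m"
    proof cases
      case 1 then show ?thesis using m len nth[of m] pr1[of m] p by (simp add: nth_vw nth_append)
    next
      case 2 then show ?thesis using m len nth[of m] pr1[of m] p by (simp add: nth_vw nth_append nw_def)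
    next
      case 3 then show ?thesis using m len nth[of m] pr2[of m] p
        by (simp add: nth_vw nth_append shw_def)
    qed
  qed
qed



lemma del_vw:
  assumes ki: "k \<le> i" and il: "i < length L"
  shows "vw (take k L @ drop i L) = take k (vw L) @
     [(et0 (L!i), ew (L!i), ermin (L!i) - prevR L k, ermax (L!i) - prevR L k)] @ drop (Suc i) (vw L)"
proof -
  define L' where "L' = take k L @ drop i L"
  have len: "length L' = length L - i + k" using ki il by (simp add: L'_def)
  have nth: "L' ! m = (if m < k then L!m else L!(m - k + i))" if "m < length L'" for m
    using that ki il by (auto simp: L'_def nth_append min_def add.commute)
  have pr1: "prevR L' m = prevR L m" if "m \<le> k" for m
  proof (cases m)
    case 0 then show ?thesis by (simp add: prevR_0)
  next
    case (Suc m') then show ?thesis using that nth[of m'] len ki il by (simp add: prevR_Suc)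
  qed
  have pr2: "prevR L' m = prevR L (m - k + i)" if mk: "k < m" "m \<le> length L'" for m
  proof -
    obtain m' where m': "m = Suc m'" using mk by (cases m) auto
    have eq: "Suc (m' - k + i) = m - k + i" using mk m' by simp
    have e: "L' ! m' = L ! (m' - k + i)" using nth[of m'] mk m' by simp
    have "prevR L' m = prevR L (Suc (m' - k + i))" unfolding m' prevR_Suc e ..
    then show ?thesis unfolding eq .
  qed
  show ?thesis unfolding L'_def[symmetric]
  proof (rule nth_equalityI)
    show "length (vw L') = length (take k (vw L) @
     [(et0 (L!i), ew (L!i), ermin (L!i) - prevR L k, ermax (L!i) - prevR L k)] @ drop (Suc i) (vw L))"
      using len ki il by simp
  next
    fix m assume "m < length (vw L')"
    then have m: "m < length L'" by simp
    consider "m < k" | "m = k" | "k < m" by linarith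
    then show "vw L' ! m = (take k (vw L) @
     [(et0 (L!i), ew (L!i), ermin (L!i) - prevR L k, ermax (L!i) - prevR L k)] @ drop (Suc i) (vw L)) ! m"
    proof cases
      case 1 then show ?thesis using m len nth[of m] pr1[of m] ki il by (simp add: nth_vw nth_append)
    next
      case 2 then show ?thesis using m len nth[of m] pr1[of m] ki il by (simp add: nth_vw nth_append)
    next
      case 3
      then have "m - k + i < length L" "(m - Suc k) + Suc i = m - k + i"
        "Suc (i + m - Suc k) = m + i - k" using m len ki il by auto
      then show ?thesis using 3 m len nth[of m] pr2[of m] ki il
        by (simp add: nth_vw nth_append)
    qed
  qed
qed

definition Gv :: "nat \<times> nat \<times> int \<times> int \<Rightarrow> int" where
  "Gv e = (case e of (t0, wt, a, b) \<Rightarrow> a + int wt)"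

lemma block_sum:
  assumes "k \<le> i" "i \<le> length L"
  shows "sum_list (map Gv (take (i - k) (drop k (vw L)))) = prevR L i - prevR L k"
  using assms
proof (induction i rule: dec_induct)
  case base then show ?case by simp
next
  case (step i)
  have "take (Suc i - k) (drop k (vw L)) = take (i - k) (drop k (vw L)) @ [vw L ! i]"
  proof -
    have "Suc i - k = Suc (i - k)" using step by simp
    moreover have "i - k < length (drop k (vw L))" using step by simp
    ultimately show ?thesis using step by (simp add: take_Suc_conv_app_nth)
  qed
  then show ?case using step by (simp add: nth_vw Gv_def prevR_Suc)
qed



definition Fq :: "nat \<Rightarrow> nat \<Rightarrow> nat \<times> nat \<times> int \<times> int \<Rightarrow> int" where
  "Fq t' \<alpha> e = (case e of (t0, wt, a, b) \<Rightarrow> if \<not> hb t' t0 \<alpha> then a + int wt else 0)"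

definition rhs :: "real \<Rightarrow> (nat \<Rightarrow> nat) \<Rightarrow> nat \<Rightarrow> nat \<Rightarrow> nat \<Rightarrow> int" where
  "rhs \<epsilon> w k t' \<alpha> = int (\<Sum>u\<in>{u. 1 \<le> u \<and> u \<le> k \<and> \<not> hb t' (t0val \<epsilon> w u) \<alpha>}. w u) + 1"

definition goodE :: "nat \<Rightarrow> nat \<times> nat \<times> int \<times> int \<Rightarrow> bool" where
  "goodE t e = (case e of (t0, wt, a, b) \<Rightarrow> 1 \<le> wt \<and> 0 \<le> a \<and> b \<le> int t \<and> b - a \<le> int t0 \<and> t0 \<le> t)"

definition Inv :: "real \<Rightarrow> (nat \<Rightarrow> nat) \<Rightarrow> nat \<Rightarrow> nat \<Rightarrow> 'a entry list \<Rightarrow> bool" where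
  "Inv \<epsilon> w k t L \<longleftrightarrow> L \<noteq> [] \<and> ev (last L) = PInf \<and> (\<forall>e\<in>set (vw L). goodE t e) \<and>
     (\<forall>t' \<alpha>. t \<le> t' \<longrightarrow> sum_list (map (Fq t' \<alpha>) (vw L)) \<le> rhs \<epsilon> w k t' \<alpha>)"

lemma goodE_mono: "goodE t e \<Longrightarrow> t \<le> t2 \<Longrightarrow> goodE t2 e"
  unfolding goodE_def by (cases e) auto

lemma Fq_nonneg: "goodE t e \<Longrightarrow> 0 \<le> Fq t' \<alpha> e"
  unfolding goodE_def Fq_def by (cases e) auto

lemma Gv_nonneg: "goodE t e \<Longrightarrow> 0 \<le> Gv e"
  unfolding goodE_def Gv_def by (cases e) auto

lemma Wsum_Suc: "Wsum w (Suc k) = Wsum w k + w (Suc k)"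
  by (simp add: Wsum_def)

lemma Wsum_0: "Wsum w 0 = 0" by (simp add: Wsum_def)

lemma tval_0: "tval \<epsilon> w 0 = 0" by (simp add: tval_def Wsum_0)

lemma tval_le_t0val:
  assumes "0 < \<epsilon>"
  shows "tval \<epsilon> w k \<le> t0val \<epsilon> w (Suc k)"
proof -
  have "\<epsilon> * real (Wsum w k) \<le> \<epsilon> * (real (Wsum w k) + 1)" using assms by simp
  then have "\<lfloor>\<epsilon> * real (Wsum w k)\<rfloor> \<le> \<lfloor>\<epsilon> * (real (Wsum w k) + 1)\<rfloor>" by (rule floor_mono)
  then show ?thesis unfolding tval_def t0val_def by simp
qed

lemma t0val_le_tval:
  assumes "0 < \<epsilon>" "0 < w (Suc k)"
  shows "t0val \<epsilon> w (Suc k) \<le> tval \<epsilon> w (Suc k)"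
proof -
  have "real (Wsum w k) + 1 \<le> real (Wsum w (Suc k))" using assms(2) by (simp add: Wsum_Suc)
  then have "\<epsilon> * (real (Wsum w k) + 1) \<le> \<epsilon> * real (Wsum w (Suc k))" using assms(1) by simp
  then have "\<lfloor>\<epsilon> * (real (Wsum w k) + 1)\<rfloor> \<le> \<lfloor>\<epsilon> * real (Wsum w (Suc k))\<rfloor>" by (rule floor_mono)
  then show ?thesis unfolding tval_def t0val_def by simp
qed

lemma tval_mono_Suc:
  assumes "0 < \<epsilon>" "0 < w (Suc k)"
  shows "tval \<epsilon> w k \<le> tval \<epsilon> w (Suc k)"
  using tval_le_t0val[of \<epsilon> w k] t0val_le_tval[of \<epsilon> w k] assms by linarith

lemma rhs_Suc:
  "rhs \<epsilon> w (Suc k) t' \<alpha> = rhs \<epsilon> w k t' \<alpha> + (if \<not> hb t' (t0val \<epsilon> w (Suc k)) \<alpha> then int (w (Suc k)) else 0)"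
proof -
  let ?A = "{u. 1 \<le> u \<and> u \<le> k \<and> \<not> hb t' (t0val \<epsilon> w u) \<alpha>}"
  have fin: "finite ?A" by (rule finite_subset[of _ "{..k}"]) auto
  show ?thesis
  proof (cases "\<not> hb t' (t0val \<epsilon> w (Suc k)) \<alpha>")
    case True
    then have "{u. 1 \<le> u \<and> u \<le> Suc k \<and> \<not> hb t' (t0val \<epsilon> w u) \<alpha>} = insert (Suc k) ?A"
      by (auto simp: le_Suc_eq)
    then show ?thesis using True fin by (simp add: rhs_def)
  next
    case False
    then have "{u. 1 \<le> u \<and> u \<le> Suc k \<and> \<not> hb t' (t0val \<epsilon> w u) \<alpha>} = ?A"
      by (auto simp: le_Suc_eq)
    then show ?thesis using False by (simp add: rhs_def)
  qed
qed

lemma rhs_0: "rhs \<epsilon> w 0 t' \<alpha> = 1"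
proof -
  have e: "{u. 1 \<le> u \<and> u \<le> (0::nat) \<and> \<not> hb t' (t0val \<epsilon> w u) \<alpha>} = {}" by auto
  show ?thesis unfolding rhs_def e by simp
qed

lemma Inv_init: "Inv \<epsilon> w 0 0 wqs_init"
proof -
  have v: "vw (wqs_init :: 'a entry list) = [(0, 1, 0, 0)]"
    by (simp add: vw_def wqs_init_def prevR_0)
  show ?thesis unfolding Inv_def v
    by (auto simp: wqs_init_def goodE_def Fq_def rhs_0)
qed

lemma Inv_insert:
  assumes inv: "Inv \<epsilon> w k (tval \<epsilon> w k) L" and e: "0 < \<epsilon>" and wp: "0 < w (Suc k)"
  shows "Inv \<epsilon> w (Suc k) (tval \<epsilon> w (Suc k)) (wqs_insert L x (w (Suc k)) (t0val \<epsilon> w (Suc k)))"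
proof -
  let ?t = "tval \<epsilon> w k" and ?t2 = "tval \<epsilon> w (Suc k)" and ?t0n = "t0val \<epsilon> w (Suc k)"
  let ?wn = "w (Suc k)"
  define p where "p = ins_pos L x"
  have ne: "L \<noteq> []" and la: "ev (last L) = PInf" and gd: "\<forall>e\<in>set (vw L). goodE ?t e"
    and I6: "\<And>t' \<alpha>. ?t \<le> t' \<Longrightarrow> sum_list (map (Fq t' \<alpha>) (vw L)) \<le> rhs \<epsilon> w k t' \<alpha>"
    using inv unfolding Inv_def by auto
  have p: "p < length L" unfolding p_def using ins_pos_lt[OF ne la] .
  define nw where "nw = \<lparr>ev = Fin x, ew = ?wn, ermin = prevR L p, ermax = ermax (L ! p), et0 = ?t0n\<rparr>"
  define L' where "L' = take p L @ [nw] @ map (shw ?wn) (drop p L)"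
  have L'eq: "wqs_insert L x ?wn ?t0n = L'"
    unfolding L'_def nw_def p_def by (rule wqs_insert_alt)
  define nv where "nv = (?t0n, ?wn, 0::int, ermax (L!p) - prevR L p)"
  have V: "vw L' = take p (vw L) @ [nv] @ drop p (vw L)"
    unfolding L'_def nw_def nv_def by (rule ins_vw[OF p])
  have tt: "?t \<le> ?t2" using tval_mono_Suc[of \<epsilon> w k] e wp by simp
  have t0lo: "?t \<le> ?t0n" using tval_le_t0val[of \<epsilon> w k] e by simp
  have t0hi: "?t0n \<le> ?t2" using t0val_le_tval[of \<epsilon> w k] e wp by simp
  have "goodE ?t (vw L ! p)" using gd p by simp
  then have bp: "ermax (L!p) - prevR L p \<le> int ?t" using p by (simp add: nth_vw goodE_def)
  have gnv: "goodE ?t2 nv" unfolding nv_def goodE_def using bp t0lo t0hi tt wp by auto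
  have ne': "L' \<noteq> []" by (simp add: L'_def)
  have la': "ev (last L') = PInf"
  proof -
    have "drop p L \<noteq> []" using p by simp
    then have "last L' = shw ?wn (last (drop p L))" by (simp add: L'_def last_map)
    also have "last (drop p L) = last L" using p by simp
    finally show ?thesis using la by (simp add: shw_def)
  qed
  have gd': "\<forall>e\<in>set (vw L'). goodE ?t2 e"
  proof
    fix e assume "e \<in> set (vw L')"
    then have "e \<in> set (vw L) \<or> e = nv" unfolding V using in_set_takeD in_set_dropD by fastforce
    then show "goodE ?t2 e" using gd gnv goodE_mono[OF _ tt] by blast
  qed
  have I6': "sum_list (map (Fq t' \<alpha>) (vw L')) \<le> rhs \<epsilon> w (Suc k) t' \<alpha>" if "?t2 \<le> t'" for t' \<alpha>
  proof -
    have "sum_list (map (Fq t' \<alpha>) (vw L')) = sum_list (map (Fq t' \<alpha>) (vw L)) + Fq t' \<alpha> nv"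
    proof -
      have "sum_list (map (Fq t' \<alpha>) (vw L')) = sum_list (map (Fq t' \<alpha>) (take p (vw L))) + Fq t' \<alpha> nv
          + sum_list (map (Fq t' \<alpha>) (drop p (vw L)))" unfolding V by simp
      also have "\<dots> = sum_list (map (Fq t' \<alpha>) (take p (vw L) @ drop p (vw L))) + Fq t' \<alpha> nv"
        by (simp only: map_append sum_list_append)
      finally show ?thesis by simp
    qed
    also have "\<dots> \<le> rhs \<epsilon> w k t' \<alpha> + Fq t' \<alpha> nv" using I6[of t' \<alpha>] that tt by simp
    also have "\<dots> = rhs \<epsilon> w (Suc k) t' \<alpha>" by (simp add: rhs_Suc nv_def Fq_def)
    finally show ?thesis .
  qed
  show ?thesis unfolding L'eq Inv_def using ne' la' gd' I6' by blast
qed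



lemma segStart_props:
  assumes "1 \<le> i"
  shows "1 \<le> segStart t L i" "segStart t L i \<le> i"
    "\<And>m. segStart t L i \<le> m \<Longrightarrow> m < i \<Longrightarrow> vE t L m < vE t L i"
proof -
  have w: "1 \<le> i \<and> (\<forall>m. i \<le> m \<and> m < i \<longrightarrow> vE t L m < vE t L i)" using assms by simp
  have P: "1 \<le> segStart t L i \<and> (\<forall>m. segStart t L i \<le> m \<and> m < i \<longrightarrow> vE t L m < vE t L i)"
    unfolding segStart_def by (rule LeastI[of _ i]) (rule w)
  then show "1 \<le> segStart t L i" by simp
  show "segStart t L i \<le> i" unfolding segStart_def by (rule Least_le) (rule w)
  fix m assume "segStart t L i \<le> m" "m < i" then show "vE t L m < vE t L i" using P by blast
qed

lemma GE_eq: "GE L m = prevR L m - prevR L (m - 1)"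
  by (simp add: GE_def gE_def prevR_def)

lemma telescope:
  assumes "1 \<le> j" "j \<le> n"
  shows "(\<Sum>m\<in>{j..<n}. GE L m) = prevR L (n - 1) - prevR L (j - 1)"
  using assms(2)
proof (induction n rule: dec_induct)
  case base then show ?case by simp
next
  case (step n)
  then have "{j..<Suc n} = insert n {j..<n}" by auto
  then show ?case using step assms(1) by (simp add: GE_eq)
qed

lemma GstarE_eq:
  assumes "1 \<le> i"
  shows "GstarE t L i = prevR L i - prevR L (segStart t L i - 1)"
proof -
  have s: "1 \<le> segStart t L i" "segStart t L i \<le> i" using segStart_props[OF assms] by auto
  have "GstarE t L i = GE L i + (prevR L (i - 1) - prevR L (segStart t L i - 1))"
    unfolding GstarE_def using telescope[OF s] by simp
  then show ?thesis by (simp add: GE_eq)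
qed

lemma gD_eq: "gE L (Suc i) + DeltaE L (Suc i) = ermax (L!i) - prevR L i + 1"
  by (simp add: gE_def DeltaE_def prevR_def rminE_def rmaxE_def)

lemma list_decomp:
  assumes "k \<le> i" "i < length V"
  shows "V = take k V @ take (i - k) (drop k V) @ [V!i] @ drop (Suc i) V"
proof -
  have "take k V @ take (i - k) (drop k V) = take i V"
    using assms by (metis le_add_diff_inverse take_add)
  then have "take k V @ take (i - k) (drop k V) @ [V!i] @ drop (Suc i) V = take i V @ [V!i] @ drop (Suc i) V"
    by (metis append.assoc)
  also have "\<dots> = V" using assms(2) by (simp add: id_take_nth_drop[symmetric])
  finally show ?thesis by simp
qed

lemma vE_eq: "vE t L (Suc m) = band t (et0 (L!m))" by (simp add: vE_def)

lemma Inv_del: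
  assumes inv: "Inv \<epsilon> w k t L" and ds: "del_step t L L'"
  shows "Inv \<epsilon> w k t L'"
proof -
  have ne: "L \<noteq> []" and la: "ev (last L) = PInf" and gd: "\<forall>e\<in>set (vw L). goodE t e"
    and I6: "\<And>t' \<alpha>. t \<le> t' \<Longrightarrow> sum_list (map (Fq t' \<alpha>) (vw L)) \<le> rhs \<epsilon> w k t' \<alpha>"
    using inv unfolding Inv_def by auto
  obtain i where dl: "deletable t L i" and L'eq: "L' = delete_seg t L i" using ds del_step_def by blast
  have i1: "1 \<le> i" and il: "i < length L" and vv: "vE t L i \<le> vE t L (Suc i)"
    and cnd: "GstarE t L i + gE L (Suc i) + DeltaE L (Suc i) \<le> int t"
    using dl unfolding deletable_def by auto
  define j where "j = segStart t L i"
  have j1: "1 \<le> j" and ji: "j \<le> i" and segv: "\<And>m. j \<le> m \<Longrightarrow> m < i \<Longrightarrow> vE t L m < vE t L i"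
    using segStart_props[OF i1] unfolding j_def by auto
  define k0 where "k0 = j - 1"
  have k0i: "k0 \<le> i" using ji by (simp add: k0_def)
  have L'd: "L' = take k0 L @ drop i L" unfolding L'eq delete_seg_def k0_def j_def ..
  define V where "V = vw L"
  define S where "S = prevR L i - prevR L k0"
  define blk where "blk = take (i - k0) (drop k0 V)"
  have Sblk: "sum_list (map Gv blk) = S" unfolding blk_def S_def V_def
    by (rule block_sum[OF k0i]) (use il in simp)
  obtain t0i wi ai bi where Vi: "V ! i = (t0i, wi, ai, bi)" by (cases "V ! i") auto
  have Vi': "t0i = et0 (L!i)" "wi = ew (L!i)" "ai = ermin (L!i) - prevR L i" "bi = ermax (L!i) - prevR L i"
    using Vi il by (simp_all add: V_def nth_vw)
  define nv where "nv = (t0i, wi, ai + S, bi + S)"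
  have V': "vw L' = take k0 V @ [nv] @ drop (Suc i) V"
    unfolding L'd V_def nv_def using del_vw[OF k0i il] Vi' S_def by simp
  have Vd: "V = take k0 V @ blk @ [V!i] @ drop (Suc i) V"
    unfolding blk_def by (rule list_decomp[OF k0i]) (simp add: V_def il)
  have gVi: "goodE t (V!i)" using gd il by (simp add: V_def)
  have blkset: "\<And>e. e \<in> set blk \<Longrightarrow> \<exists>m. k0 \<le> m \<and> m < i \<and> e = V ! m"
  proof -
    fix e assume "e \<in> set blk"
    then obtain n where n: "n < length blk" "e = blk ! n" by (auto simp: in_set_conv_nth)
    then have "n < i - k0" "k0 + n < length V" using il k0i by (auto simp: blk_def V_def)
    then show "\<exists>m. k0 \<le> m \<and> m < i \<and> e = V ! m" using n
      by (intro exI[of _ "k0 + n"]) (auto simp: blk_def)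
  qed
  have gblk: "\<And>e. e \<in> set blk \<Longrightarrow> goodE t e"
    using blkset gd il by (force simp: V_def)
  have S0: "0 \<le> S" unfolding Sblk[symmetric] by (rule sum_list_nonneg) (use gblk Gv_nonneg in force)
  have SC: "S + bi + 1 \<le> int t"
  proof -
    have "GstarE t L i = S" using GstarE_eq[OF i1] by (simp add: S_def k0_def j_def)
    moreover have "gE L (Suc i) + DeltaE L (Suc i) = bi + 1" using gD_eq Vi' by simp
    ultimately show ?thesis using cnd by simp
  qed
  have gnv: "goodE t nv" using gVi S0 SC unfolding nv_def Vi goodE_def by auto
  have bandle: "band t (fst e) \<le> band t t0i" if eb: "e \<in> set blk" for e
  proof -
    obtain m where m: "k0 \<le> m" "m < i" "e = V ! m" using blkset[OF eb] by blast
    have "vE t L (Suc m) \<le> vE t L i"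
    proof (cases "Suc m < i")
      case True
      have "j \<le> Suc m" using m(1) k0_def by simp
      then show ?thesis using segv[of "Suc m"] True by simp
    next
      case False
      then have "Suc m = i" using m by simp
      then show ?thesis by simp
    qed
    then have "vE t L (Suc m) \<le> vE t L (Suc i)" using vv by simp
    then show ?thesis using m il Vi' by (simp add: vE_eq V_def nth_vw)
  qed
  have ne': "L' \<noteq> []" using il by (simp add: L'd)
  have la': "ev (last L') = PInf" using il la by (simp add: L'd)
  have gd': "\<forall>e\<in>set (vw L'). goodE t e"
  proof
    fix e assume "e \<in> set (vw L')"
    then have "e \<in> set V \<or> e = nv" unfolding V' using in_set_takeD in_set_dropD by fastforce
    then show "goodE t e" using gd gnv V_def by blast
  qed
  have I6': "sum_list (map (Fq t' \<alpha>) (vw L')) \<le> rhs \<epsilon> w k t' \<alpha>" if tt: "t \<le> t'" for t' \<alpha>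
  proof -
    let ?F = "Fq t' \<alpha>"
    have key: "?F nv \<le> sum_list (map ?F blk) + ?F (V!i)"
    proof (cases "hb t' t0i \<alpha>")
      case True
      then have "?F nv = 0" by (simp add: nv_def Fq_def)
      moreover have "0 \<le> sum_list (map ?F blk)"
        by (rule sum_list_nonneg) (use gblk Fq_nonneg in force)
      moreover have "0 \<le> ?F (V!i)" using Fq_nonneg[OF gVi] .
      ultimately show ?thesis by simp
    next
      case False
      have "map ?F blk = map Gv blk"
      proof (rule map_cong[OF refl])
        fix e assume e: "e \<in> set blk"
        obtain m where m: "k0 \<le> m" "m < i" "e = V ! m" using blkset[OF e] by blast
        have ge: "goodE t e" using gblk[OF e] .
        have "fst e \<le> t" using ge by (cases e) (simp add: goodE_def)
        moreover have "t0i \<le> t" using gVi Vi by (simp add: goodE_def)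
        ultimately have "\<not> hb t' (fst e) \<alpha>" using stab[OF _ _ tt bandle[OF e] False] by simp
        then show "?F e = Gv e" by (cases e) (simp add: Fq_def Gv_def)
      qed
      then have "sum_list (map ?F blk) = S" using Sblk by metis
      then show ?thesis using False by (simp add: nv_def Fq_def Vi)
    qed
    have "sum_list (map ?F (vw L')) = sum_list (map ?F (take k0 V)) + ?F nv + sum_list (map ?F (drop (Suc i) V))"
      unfolding V' by simp
    also have "\<dots> \<le> sum_list (map ?F (take k0 V)) + sum_list (map ?F blk) + ?F (V!i) + sum_list (map ?F (drop (Suc i) V))"
      using key by simp
    also have "\<dots> = sum_list (map ?F V)"
    proof -
      have "sum_list (map ?F V) = sum_list (map ?F (take k0 V @ blk @ [V!i] @ drop (Suc i) V))"
        using Vd by (rule arg_cong)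
      then show ?thesis by simp
    qed
    also have "\<dots> \<le> rhs \<epsilon> w k t' \<alpha>" using I6[OF tt] V_def by simp
    finally show ?thesis .
  qed
  show ?thesis unfolding Inv_def using ne' la' gd' I6' by blast
qed

lemma Inv_reach:
  assumes "gk_reach \<epsilon> x w k L" "0 < \<epsilon>" "\<forall>i. 0 < w i"
  shows "Inv \<epsilon> w k (tval \<epsilon> w k) L"
  using assms(1)
proof (induction rule: gk_reach.induct)
  case init then show ?case using Inv_init tval_0 by metis
next
  case (step k L L')
  have "Inv \<epsilon> w (Suc k) (tval \<epsilon> w (Suc k)) (wqs_insert L (x (Suc k)) (w (Suc k)) (t0val \<epsilon> w (Suc k)))"
    using Inv_insert[OF step.IH assms(2)] assms(3) by blast
  with step.hyps(2) show ?case
    by (induction rule: rtranclp_induct) (auto intro: Inv_del)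
qed



lemma GE_vw: "m < length L \<Longrightarrow> GE L (Suc m) = Gv (vw L ! m)"
  by (simp add: GE_eq prevR_Suc nth_vw Gv_def)

definition Fa :: "nat \<Rightarrow> 'a entry list \<Rightarrow> nat \<Rightarrow> nat set" where
  "Fa t L \<alpha> = {i. 1 \<le> i \<and> i < length L \<and> \<not> vE t L (Suc i) < vE t L i \<and> vE t L (Suc i) = \<alpha>}"

lemma card_le2:
  fixes S :: "nat set"
  assumes "finite S" "\<And>a b. a \<in> S \<Longrightarrow> b \<in> S \<Longrightarrow> a < b \<Longrightarrow> b = Suc a"
  shows "card S \<le> 2"
proof (cases "S = {}")
  case True then show ?thesis by simp
next
  case False
  define a where "a = Min S"
  have aS: "a \<in> S" using False assms(1) by (simp add: a_def)
  have "S \<subseteq> {a, Suc a}"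
  proof
    fix b assume b: "b \<in> S"
    then have "a \<le> b" using assms(1) by (simp add: a_def)
    then show "b \<in> {a, Suc a}" using assms(2)[OF aS b] by (cases "a = b") auto
  qed
  then have "card S \<le> card {a, Suc a}" by (rule card_mono[rotated]) simp
  then show ?thesis by simp
qed

lemma sum_index:
  "sum_list (map f (vw L)) = (\<Sum>n\<in>{1..length L}. f (vw L ! (n - 1)))"
proof -
  have "sum_list (map f (vw L)) = (\<Sum>m = 0..<length L. f (vw L ! m))"
    by (simp add: sum_list_sum_nth)
  also have "\<dots> = (\<Sum>n = Suc 0..<Suc (length L). f (vw L ! (n - 1)))"
    by (subst sum.shift_bounds_Suc_ivl) simp
  also have "{Suc 0..<Suc (length L)} = {1..length L}" by auto
  finally show ?thesis .
qed

lemma sumbound: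
  assumes inv: "Inv \<epsilon> w k t L"
  shows "(\<Sum>n\<in>{1..length L}. if vE t L n \<le> \<alpha> then GE L n else 0) \<le> rhs \<epsilon> w k t \<alpha>"
proof -
  have gd: "\<forall>e\<in>set (vw L). goodE t e"
    and I6: "sum_list (map (Fq t \<alpha>) (vw L)) \<le> rhs \<epsilon> w k t \<alpha>"
    using inv unfolding Inv_def by auto
  have "(\<Sum>n\<in>{1..length L}. if vE t L n \<le> \<alpha> then GE L n else 0) =
        (\<Sum>n\<in>{1..length L}. Fq t \<alpha> (vw L ! (n - 1)))"
  proof (rule sum.cong[OF refl])
    fix n assume n: "n \<in> {1..length L}"
    then obtain m where m: "n = Suc m" "m < length L" by (cases n) auto
    have "goodE t (vw L ! m)" using gd m by simp
    then have t0: "et0 (L!m) \<le> t" using m by (simp add: goodE_def nth_vw)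
    show "(if vE t L n \<le> \<alpha> then GE L n else 0) = Fq t \<alpha> (vw L ! (n - 1))"
      using m band_le_iff[OF t0, of \<alpha>] GE_vw[of m L]
      by (simp add: vE_eq nth_vw Fq_def Gv_def)
  qed
  also have "\<dots> = sum_list (map (Fq t \<alpha>) (vw L))" by (simp add: sum_index)
  finally show ?thesis using I6 by simp
qed

lemma GE_nonneg:
  assumes inv: "Inv \<epsilon> w k t L" and n: "1 \<le> n" "n \<le> length L"
  shows "0 \<le> GE L n"
proof -
  obtain m where m: "n = Suc m" "m < length L" using n by (cases n) auto
  have "goodE t (vw L ! m)" using inv m unfolding Inv_def by simp
  then show ?thesis using GE_vw[OF m(2)] m Gv_nonneg by simp
qed

lemma type2_sum:
  assumes inv: "Inv \<epsilon> w k t L" and nodel: "\<not> deletable t L i"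
    and i: "1 \<le> i" "i < length L" and vv: "\<not> vE t L (Suc i) < vE t L i"
  shows "int t - int (et0 (L!i)) + 1 \<le> (\<Sum>n\<in>{segStart t L i..Suc i}. GE L n)"
proof -
  obtain t0i wi ai bi where Vi: "vw L ! i = (t0i, wi, ai, bi)" by (cases "vw L ! i") auto
  have Vi': "t0i = et0 (L!i)" "wi = ew (L!i)" "ai = ermin (L!i) - prevR L i" "bi = ermax (L!i) - prevR L i"
    using Vi i by (simp_all add: nth_vw)
  have "goodE t (vw L ! i)" using inv i unfolding Inv_def by simp
  then have g: "1 \<le> wi" "bi - ai \<le> int t0i" using Vi by (auto simp: goodE_def)
  have cnd: "GstarE t L i + gE L (Suc i) + DeltaE L (Suc i) > int t"
    using nodel i vv unfolding deletable_def by auto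
  have s: "1 \<le> segStart t L i" "segStart t L i \<le> i" using segStart_props[OF i(1)] by auto
  have "GstarE t L i = prevR L i - prevR L (segStart t L i - 1)" using GstarE_eq[OF i(1)] .
  moreover have "gE L (Suc i) + DeltaE L (Suc i) = bi + 1" using gD_eq Vi' by simp
  ultimately have c2: "prevR L i - prevR L (segStart t L i - 1) + bi + 1 > int t" using cnd by simp
  have "{segStart t L i..Suc i} = {segStart t L i..<Suc (Suc i)}" by auto
  then have "(\<Sum>n\<in>{segStart t L i..Suc i}. GE L n) = prevR L (Suc i) - prevR L (segStart t L i - 1)"
    using telescope[of "segStart t L i" "Suc (Suc i)" L] s by simp
  also have "prevR L (Suc i) = prevR L i + ai + int wi" using Vi' by (simp add: prevR_Suc)
  finally show ?thesis using c2 g Vi' by linarith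
qed

lemma pow_le_sum:
  assumes "t0 \<le> t" "band t t0 = \<alpha>"
  shows "(2::int)^\<alpha> \<le> 2 * (int t - int t0 + 1)"
proof (cases \<alpha>)
  case 0 then show ?thesis using assms(1) by simp
next
  case (Suc b)
  then have "\<not> band t t0 \<le> b" using assms by simp
  then have "hb t t0 b" using band_le_iff[OF assms(1)] by simp
  then have "2^b \<le> t - t0" unfolding hb_def by simp
  then have "int (2^b) \<le> int (t - t0)" by (simp only: of_nat_le_iff)
  moreover have "int (t - t0) = int t - int t0" using assms(1) by (rule of_nat_diff)
  moreover have "int (2^b) = (2::int)^b" by simp
  ultimately have "(2::int)^b \<le> int t - int t0" by simp
  then show ?thesis using Suc by simp
qed



lemma count_F:
  assumes inv: "Inv \<epsilon> w k t L" and nodel: "\<forall>i. \<not> deletable t L i"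
  shows "int (card (Fa t L \<alpha>)) * 2^\<alpha> \<le> 4 * rhs \<epsilon> w k t \<alpha>"
proof -
  let ?N = "{1..length L}"
  let ?F = "Fa t L \<alpha>"
  define I where "I i = {segStart t L i..Suc i}" for i
  have finF: "finite ?F" by (rule finite_subset[of _ "{..<length L}"]) (auto simp: Fa_def)
  have Fi: "1 \<le> i" "i < length L" "vE t L i \<le> \<alpha>" "vE t L (Suc i) = \<alpha>" if "i \<in> ?F" for i
    using that by (auto simp: Fa_def)
  have Isub: "1 \<le> n \<and> n \<le> length L \<and> vE t L n \<le> \<alpha>" if iF: "i \<in> ?F" and nI: "n \<in> I i" for i n
  proof -
    have s: "1 \<le> segStart t L i" "segStart t L i \<le> n" "n \<le> Suc i"
      using segStart_props[OF Fi(1)[OF iF]] nI by (auto simp: I_def)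
    have "vE t L n \<le> \<alpha>"
    proof -
      consider "n < i" | "n = i" | "n = Suc i" using s(3) by linarith
      then show ?thesis
      proof cases
        case 1 then show ?thesis using segStart_props(3)[OF Fi(1)[OF iF], where t=t and L=L and m=n] s Fi[OF iF] by simp
      next
        case 2 then show ?thesis using Fi[OF iF] by simp
      next
        case 3 then show ?thesis using Fi[OF iF] by simp
      qed
    qed
    then show ?thesis using s Fi[OF iF] by simp
  qed
  have lower: "(2::int)^\<alpha> \<le> 2 * (\<Sum>n\<in>I i. GE L n)" if iF: "i \<in> ?F" for i
  proof -
    have nd: "\<not> vE t L (Suc i) < vE t L i" using iF by (simp add: Fa_def)
    have ts: "int t - int (et0 (L!i)) + 1 \<le> (\<Sum>n\<in>I i. GE L n)"
      unfolding I_def using type2_sum[OF inv _ Fi(1,2)[OF iF] nd] nodel by blast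
    have "goodE t (vw L ! i)" using inv Fi(2)[OF iF] unfolding Inv_def by simp
    then have t0: "et0 (L!i) \<le> t" using Fi(2)[OF iF] by (simp add: goodE_def nth_vw)
    have "band t (et0 (L!i)) = \<alpha>" using Fi(4)[OF iF] by (simp add: vE_eq)
    have p: "(2::int)^\<alpha> \<le> 2 * (int t - int (et0 (L!i)) + 1)" using pow_le_sum[OF t0 \<open>band t (et0 (L!i)) = \<alpha>\<close>] .
    have "2 * (int t - int (et0 (L!i)) + 1) \<le> 2 * (\<Sum>n\<in>I i. GE L n)" using ts by simp
    with p show ?thesis by (rule order_trans)
  qed
  have mult: "card {i. i \<in> ?F \<and> n \<in> I i} \<le> 2" for n
  proof (rule card_le2)
    show "finite {i. i \<in> ?F \<and> n \<in> I i}" using finF by simp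
  next
    fix a b assume a: "a \<in> {i. i \<in> ?F \<and> n \<in> I i}" and b: "b \<in> {i. i \<in> ?F \<and> n \<in> I i}" and ab: "a < b"
    show "b = Suc a"
    proof (rule ccontr)
      assume "b \<noteq> Suc a"
      then have lt: "Suc a < b" using ab by simp
      have "n \<le> Suc a" using a by (simp add: I_def)
      moreover have "segStart t L b \<le> n" using b by (simp add: I_def)
      ultimately have "vE t L (Suc a) < vE t L b"
        using segStart_props(3)[OF Fi(1), where t=t and L=L and m="Suc a" and i=b] b lt by auto
      then show False using Fi[of a] Fi[of b] a b by simp
    qed
  qed
  have GN: "0 \<le> GE L n" if "n \<in> ?N" for n using GE_nonneg[OF inv] that by simp
  have "int (card ?F) * 2^\<alpha> = (\<Sum>i\<in>?F. (2::int)^\<alpha>)" by simp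
  also have "\<dots> \<le> (\<Sum>i\<in>?F. 2 * (\<Sum>n\<in>I i. GE L n))" by (rule sum_mono) (rule lower)
  also have "\<dots> = 2 * (\<Sum>i\<in>?F. (\<Sum>n\<in>{n. n \<in> ?N \<and> n \<in> I i}. GE L n))"
  proof -
    have "\<And>i. i \<in> ?F \<Longrightarrow> {n. n \<in> ?N \<and> n \<in> I i} = I i" using Isub by auto
    then show ?thesis by (simp add: sum_distrib_left)
  qed
  also have "(\<Sum>i\<in>?F. (\<Sum>n\<in>{n. n \<in> ?N \<and> n \<in> I i}. GE L n)) =
      (\<Sum>n\<in>?N. (\<Sum>i\<in>{i. i \<in> ?F \<and> n \<in> I i}. GE L n))"
    by (rule sum.swap_restrict) (use finF in auto)
  also have "\<dots> \<le> (\<Sum>n\<in>?N. 2 * (if vE t L n \<le> \<alpha> then GE L n else 0))"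
  proof (rule sum_mono)
    fix n assume nN: "n \<in> ?N"
    show "(\<Sum>i\<in>{i. i \<in> ?F \<and> n \<in> I i}. GE L n) \<le> 2 * (if vE t L n \<le> \<alpha> then GE L n else 0)"
    proof (cases "vE t L n \<le> \<alpha>")
      case True
      have "(\<Sum>i\<in>{i. i \<in> ?F \<and> n \<in> I i}. GE L n) = int (card {i. i \<in> ?F \<and> n \<in> I i}) * GE L n"
        by simp
      also have "\<dots> \<le> 2 * GE L n" using mult[of n] GN[OF nN] by (intro mult_right_mono) auto
      finally show ?thesis using True by simp
    next
      case False
      then have e: "{i. i \<in> ?F \<and> n \<in> I i} = {}" using Isub by auto
      show ?thesis unfolding e using False by simp
    qed
  qed
  also have "\<dots> = 2 * (\<Sum>n\<in>?N. (if vE t L n \<le> \<alpha> then GE L n else 0))"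
    by (simp add: sum_distrib_left)
  finally have "int (card ?F) * 2^\<alpha> \<le> 4 * (\<Sum>n\<in>?N. (if vE t L n \<le> \<alpha> then GE L n else 0))"
    by linarith
  also have "\<dots> \<le> 4 * rhs \<epsilon> w k t \<alpha>" using sumbound[OF inv] by simp
  finally show ?thesis .
qed



lemma not_hb_bound: "\<not> hb t t0 \<alpha> \<Longrightarrow> t + 2 \<le> t0 + 2^(Suc \<alpha>)"
proof -
  assume h: "\<not> hb t t0 \<alpha>"
  have a: "t mod 2^\<alpha> < 2^\<alpha>" by simp
  have b: "t - t0 < 2^\<alpha> + t mod 2^\<alpha>" using h unfolding hb_def by simp
  have c: "(1::nat) \<le> 2^\<alpha>" by simp
  have d: "(2::nat)^(Suc \<alpha>) = 2^\<alpha> + 2^\<alpha>" by simp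
  show ?thesis unfolding d using a b c by linarith
qed

lemma Wsum_split:
  assumes "1 \<le> u0" "u0 \<le> k"
  shows "Wsum w k = Wsum w (u0 - 1) + (\<Sum>u\<in>{u0..k}. w u)"
proof -
  have "{1..k} = {1..u0-1} \<union> {u0..k}" using assms by auto
  moreover have "{1..u0-1} \<inter> {u0..k} = {}" by auto
  ultimately show ?thesis unfolding Wsum_def by (simp add: sum.union_disjoint)
qed

lemma rhs_bound:
  assumes e: "0 < \<epsilon>" and t: "t = tval \<epsilon> w k"
  shows "real_of_int (rhs \<epsilon> w k t \<alpha>) \<le> (2^(Suc \<alpha>) - 1) / \<epsilon> + 2"
proof -
  define U where "U = {u. 1 \<le> u \<and> u \<le> k \<and> \<not> hb t (t0val \<epsilon> w u) \<alpha>}"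
  have r: "rhs \<epsilon> w k t \<alpha> = int (\<Sum>u\<in>U. w u) + 1" by (simp add: rhs_def U_def)
  have finU: "finite U" by (rule finite_subset[of _ "{..k}"]) (auto simp: U_def)
  have "(1::real) \<le> 2^(Suc \<alpha>)" by (rule one_le_power) simp
  then have pos: "0 \<le> (2^(Suc \<alpha>) - 1) / \<epsilon>" using e by simp
  show ?thesis
  proof (cases "U = {}")
    case True then show ?thesis using r pos by simp
  next
    case False
    define u0 where "u0 = Min U"
    have u0U: "u0 \<in> U" using False finU by (simp add: u0_def)
    then have u01: "1 \<le> u0" "u0 \<le> k" and nh: "\<not> hb t (t0val \<epsilon> w u0) \<alpha>" by (auto simp: U_def)
    have Usub: "U \<subseteq> {u0..k}" using finU by (auto simp: u0_def U_def)
    have s1: "(\<Sum>u\<in>U. w u) \<le> (\<Sum>u\<in>{u0..k}. w u)" by (rule sum_mono2) (use Usub in auto)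
    have D: "(\<Sum>u\<in>{u0..k}. w u) = Wsum w k - Wsum w (u0 - 1)" using Wsum_split[OF u01] by simp
    have Dr: "real (\<Sum>u\<in>{u0..k}. w u) = real (Wsum w k) - real (Wsum w (u0 - 1))"
      using Wsum_split[OF u01] by simp
    have tb: "t + 2 \<le> t0val \<epsilon> w u0 + 2^(Suc \<alpha>)" using not_hb_bound[OF nh] .
    have y0: "0 \<le> \<epsilon> * (real (Wsum w (u0 - 1)) + 1)" using e by simp
    have t0r: "real (t0val \<epsilon> w u0) \<le> \<epsilon> * (real (Wsum w (u0 - 1)) + 1)"
      unfolding t0val_def using y0 by linarith
    have y1: "0 \<le> \<epsilon> * real (Wsum w k)" using e by simp
    have tr: "\<epsilon> * real (Wsum w k) < real t + 1"
      unfolding t tval_def using y1 by linarith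
    have tbr0: "real (t + 2) \<le> real (t0val \<epsilon> w u0 + 2^(Suc \<alpha>))" using tb by (simp only: of_nat_le_iff)
    then have tbr: "real t + 2 \<le> real (t0val \<epsilon> w u0) + 2^(Suc \<alpha>)" by simp
    have "\<epsilon> * real (\<Sum>u\<in>{u0..k}. w u) < 2^(Suc \<alpha>) - 1 + \<epsilon>"
      unfolding Dr using tr t0r tbr by (simp add: algebra_simps)
    then have "real (\<Sum>u\<in>{u0..k}. w u) < (2^(Suc \<alpha>) - 1 + \<epsilon>) / \<epsilon>"
      using e by (simp add: field_simps)
    also have "\<dots> = (2^(Suc \<alpha>) - 1) / \<epsilon> + 1" using e by (simp add: field_simps)
    finally have f1: "real (\<Sum>u\<in>{u0..k}. w u) < (2^(Suc \<alpha>) - 1) / \<epsilon> + 1" .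
    have "real (\<Sum>u\<in>U. w u) \<le> real (\<Sum>u\<in>{u0..k}. w u)" using s1 by (simp only: of_nat_le_iff)
    with f1 have "real (\<Sum>u\<in>U. w u) \<le> (2^(Suc \<alpha>) - 1) / \<epsilon> + 1" by linarith
    then show ?thesis using r by simp
  qed
qed

lemma card_Fa_bound:
  assumes inv: "Inv \<epsilon> w k t L" and nodel: "\<forall>i. \<not> deletable t L i"
    and e: "0 < \<epsilon>" "\<epsilon> < 1" and t: "t = tval \<epsilon> w k"
  shows "real (card (Fa t L \<alpha>)) \<le> 16 / \<epsilon>"
proof -
  have c0: "int (card (Fa t L \<alpha>)) * 2^\<alpha> \<le> 4 * rhs \<epsilon> w k t \<alpha>" using count_F[OF inv nodel] .
  then have "real_of_int (int (card (Fa t L \<alpha>)) * 2^\<alpha>) \<le> real_of_int (4 * rhs \<epsilon> w k t \<alpha>)"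
    by (simp only: of_int_le_iff)
  then have c: "real (card (Fa t L \<alpha>)) * 2^\<alpha> \<le> 4 * real_of_int (rhs \<epsilon> w k t \<alpha>)" by simp
  also have "\<dots> \<le> 4 * ((2^(Suc \<alpha>) - 1) / \<epsilon> + 2)" using rhs_bound[OF e(1) t, of \<alpha>] by (intro mult_left_mono) auto
  also have "\<dots> \<le> 4 * (2 * 2^\<alpha> / \<epsilon> + 2 * 2^\<alpha> / \<epsilon>)"
  proof -
    have "(2^(Suc \<alpha>) - 1) / \<epsilon> \<le> 2 * 2^\<alpha> / \<epsilon>" using e by (simp add: divide_right_mono)
    moreover have "(2::real) \<le> 2 * 2^\<alpha> / \<epsilon>"
    proof -
      have "(2::real) \<le> 2 * 2^\<alpha>" by simp
      also have "\<dots> \<le> 2 * 2^\<alpha> / \<epsilon>" using e by (simp add: le_divide_eq)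
      finally show ?thesis .
    qed
    ultimately show ?thesis by (intro mult_left_mono add_mono) auto
  qed
  also have "\<dots> = (16 / \<epsilon>) * 2^\<alpha>" by (simp add: field_simps)
  finally have "real (card (Fa t L \<alpha>)) * 2^\<alpha> \<le> (16 / \<epsilon>) * 2^\<alpha>" .
  moreover have "(0::real) < 2^\<alpha>" by simp
  ultimately show ?thesis by (rule mult_right_le_imp_le)
qed



lemma reach_nodel:
  assumes "gk_reach \<epsilon> x w k L" "2 \<le> tval \<epsilon> w k"
  shows "\<forall>i. \<not> deletable (tval \<epsilon> w k) L i"
  using assms
proof (cases rule: gk_reach.cases)
  case init then show ?thesis using assms(2) tval_0 by simp
next
  case (step k' L0) then show ?thesis by blast
qed

lemma log_stuff:
  assumes t2: "2 \<le> t"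
  defines "A \<equiv> nat \<lfloor>log 2 (real t)\<rfloor> + 1"
  shows "t < 2^A" "real A + 1 \<le> 3 * log 2 (real t)"
proof -
  have l1: "1 \<le> log 2 (real t)" using t2 by simp
  have fl: "real A = of_int \<lfloor>log 2 (real t)\<rfloor> + 1" unfolding A_def using l1 by simp
  have "log 2 (real t) < real A" unfolding fl by linarith
  then have "2 powr log 2 (real t) < 2 powr real A" by simp
  moreover have "2 powr log 2 (real t) = real t" using t2 by simp
  moreover have "2 powr real A = 2^A" by (simp add: powr_realpow)
  ultimately have "real t < 2^A" by simp
  then show "t < 2^A" by (metis of_nat_less_iff of_nat_numeral of_nat_power)
  show "real A + 1 \<le> 3 * log 2 (real t)" unfolding fl using l1 by linarith
qed

theorem mainTheorem9:
  "\<exists>C>0. \<forall>(\<epsilon>::real) (x :: nat \<Rightarrow> 'a::linorder) (w :: nat \<Rightarrow> nat) k L.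
     0 < \<epsilon> \<and> \<epsilon> < 1 \<and> (\<forall>i. 0 < w i) \<and> gk_reach \<epsilon> x w k L \<and> 2 \<le> tval \<epsilon> w k \<longrightarrow>
     real (type2_count (tval \<epsilon> w k) L) \<le> C * (1 / \<epsilon>) * log 2 (real (tval \<epsilon> w k))"
proof (intro exI[of _ 48] conjI allI impI)
  show "(0::real) < 48" by simp
  fix \<epsilon> :: real and x :: "nat \<Rightarrow> 'a" and w :: "nat \<Rightarrow> nat" and k L
  assume H: "0 < \<epsilon> \<and> \<epsilon> < 1 \<and> (\<forall>i. 0 < w i) \<and> gk_reach \<epsilon> x w k L \<and> 2 \<le> tval \<epsilon> w k"
  then have e: "0 < \<epsilon>" "\<epsilon> < 1" and wp: "\<forall>i. 0 < w i" and r: "gk_reach \<epsilon> x w k L"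
    and t2: "2 \<le> tval \<epsilon> w k" by auto
  define t where "t = tval \<epsilon> w k"
  have inv: "Inv \<epsilon> w k t L" unfolding t_def using Inv_reach[OF r e(1) wp] .
  have nodel: "\<forall>i. \<not> deletable t L i" unfolding t_def using reach_nodel[OF r t2] .
  define A where "A = nat \<lfloor>log 2 (real t)\<rfloor> + 1"
  have tA: "t < 2^A" and A3: "real A + 1 \<le> 3 * log 2 (real t)"
    using log_stuff[of t] t2 unfolding A_def t_def by auto
  define T where "T = {i. 1 \<le> i \<and> i < length L \<and> \<not> vE t L i > vE t L (Suc i)}"
  have vb: "vE t L (Suc i) \<le> A" if "i < length L" for i
  proof -
    have "goodE t (vw L ! i)" using inv that unfolding Inv_def by simp
    then have t0: "et0 (L!i) \<le> t" using that by (simp add: goodE_def nth_vw)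
    show ?thesis using band_le_iff[OF t0] hb_big[OF tA] by (simp add: vE_eq)
  qed
  have TU: "T \<subseteq> (\<Union>\<alpha>\<in>{..A}. Fa t L \<alpha>)"
  proof
    fix i assume "i \<in> T"
    then show "i \<in> (\<Union>\<alpha>\<in>{..A}. Fa t L \<alpha>)" using vb unfolding T_def Fa_def by auto
  qed
  have finF: "finite (Fa t L \<alpha>)" for \<alpha> by (rule finite_subset[of _ "{..<length L}"]) (auto simp: Fa_def)
  have "card T \<le> card (\<Union>\<alpha>\<in>{..A}. Fa t L \<alpha>)" using TU finF by (intro card_mono) auto
  also have "\<dots> \<le> (\<Sum>\<alpha>\<in>{..A}. card (Fa t L \<alpha>))" by (rule card_UN_le) simp
  finally have "real (card T) \<le> real (\<Sum>\<alpha>\<in>{..A}. card (Fa t L \<alpha>))" by (simp only: of_nat_le_iff)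
  also have "\<dots> = (\<Sum>\<alpha>\<in>{..A}. real (card (Fa t L \<alpha>)))" by simp
  also have "\<dots> \<le> (\<Sum>\<alpha>\<in>{..A}. 16 / \<epsilon>)"
    by (rule sum_mono) (rule card_Fa_bound[OF inv nodel e], simp add: t_def)
  also have "\<dots> = (real A + 1) * (16 / \<epsilon>)" by simp
  also have "\<dots> \<le> (3 * log 2 (real t)) * (16 / \<epsilon>)"
    using A3 e by (intro mult_right_mono) auto
  also have "\<dots> = 48 * (1 / \<epsilon>) * log 2 (real t)" by simp
  finally show "real (type2_count (tval \<epsilon> w k) L) \<le> 48 * (1 / \<epsilon>) * log 2 (real (tval \<epsilon> w k))"
    unfolding type2_count_def T_def t_def .
qed

end
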